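(* Let $1/n<\gamma\ll\tau\ll\varepsilon<1$ be constants, let $k\geq 2$ be an integer, and let $G$ be a $d$-regular oriented graph on $n$ vertices with $d\geq(1/4+\varepsilon)n$. Let $\mathcal{P}_k=\{V_{ij}:i,j\in[k]\}$ be a $(k^2,\tau,\gamma)$-partition of $G$. Then for every $i\in[k]$, $$\Big|\bigcup_{j\neq i}V_{ij}\Big|\geq\tau n\quad\text{and}\quad\Big|\bigcup_{j\neq i}V_{ji}\Big|\geq\tau n.$$
   Context: Hierarchy convention: $x\ll y$ means $x\leq f(y)$ for some implicitly given non-decreasing function $f:(0,1]\to(0,1]$; the statement asserts such functions exist, constants chosen from right to left. An oriented graph has at most one edge between any two vertices; $d$-regular means all in- and outdegrees equal $d$. A $k^2$-partition of $V(G)$ is a family $\{V_{ij}:i,j\in[k]\}$ of pairwise disjoint (possibly empty) sets with union $V(G)$; $V_{i*}=\bigcup_j V_{ij}$, $V_{*j}=\bigcup_i V_{ij}$. $E(A,B)$ is the set of edges $ab$ with $a\in A,b\in B$; bad edges $\mathcal{B}_k(\mathcal{P}_k,G)=\bigcup_{i\neq j}E(V_{i*},V_{*j})$. A $(k^2,\tau,\gamma)$-partition is a $k^2$-partition with $|\mathcal{B}_k(\mathcal{P}_k,G)|\leq\gamma n^2$ and $|V_{i*}|,|V_{*j}|\geq\tau n$ for all $i,j\in[k]$. *)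

theory Defs
  imports Complex_Main
begin

definition oriented_graph :: "'a set \<Rightarrow> ('a \<times> 'a) set \<Rightarrow> bool" where
  "oriented_graph V E \<longleftrightarrow> finite V \<and> E \<subseteq> V \<times> V \<and>
     (\<forall>x. (x, x) \<notin> E) \<and> (\<forall>x y. (x, y) \<in> E \<longrightarrow> (y, x) \<notin> E)"

definition outdeg :: "('a \<times> 'a) set \<Rightarrow> 'a \<Rightarrow> nat" where
  "outdeg E x = card {y. (x, y) \<in> E}"

definition indeg :: "('a \<times> 'a) set \<Rightarrow> 'a \<Rightarrow> nat" where
  "indeg E x = card {y. (y, x) \<in> E}"

definition regular_digraph :: "'a set \<Rightarrow> ('a \<times> 'a) set \<Rightarrow> nat \<Rightarrow> bool" where
  "regular_digraph V E d \<longleftrightarrow> (\<forall>x\<in>V. outdeg E x = d \<and> indeg E x = d)"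

definition k2_partition :: "'a set \<Rightarrow> nat \<Rightarrow> (nat \<Rightarrow> nat \<Rightarrow> 'a set) \<Rightarrow> bool" where
  "k2_partition V k P \<longleftrightarrow>
     (\<forall>i\<in>{1..k}. \<forall>j\<in>{1..k}. \<forall>i'\<in>{1..k}. \<forall>j'\<in>{1..k}.
         (i, j) \<noteq> (i', j') \<longrightarrow> P i j \<inter> P i' j' = {}) \<and>
     (\<Union>i\<in>{1..k}. \<Union>j\<in>{1..k}. P i j) = V"

definition row_part :: "nat \<Rightarrow> (nat \<Rightarrow> nat \<Rightarrow> 'a set) \<Rightarrow> nat \<Rightarrow> 'a set" where
  "row_part k P i = (\<Union>j\<in>{1..k}. P i j)"

definition col_part :: "nat \<Rightarrow> (nat \<Rightarrow> nat \<Rightarrow> 'a set) \<Rightarrow> nat \<Rightarrow> 'a set" where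
  "col_part k P j = (\<Union>i\<in>{1..k}. P i j)"

definition edges_between :: "('a \<times> 'a) set \<Rightarrow> 'a set \<Rightarrow> 'a set \<Rightarrow> ('a \<times> 'a) set" where
  "edges_between E A B = {(a, b). (a, b) \<in> E \<and> a \<in> A \<and> b \<in> B}"

definition bad_edges :: "('a \<times> 'a) set \<Rightarrow> nat \<Rightarrow> (nat \<Rightarrow> nat \<Rightarrow> 'a set) \<Rightarrow> ('a \<times> 'a) set" where
  "bad_edges E k P = (\<Union>i\<in>{1..k}. \<Union>j\<in>{1..k}.
      if i \<noteq> j then edges_between E (row_part k P i) (col_part k P j) else {})"

definition k2_tau_gamma_partition ::
  "'a set \<Rightarrow> ('a \<times> 'a) set \<Rightarrow> nat \<Rightarrow> real \<Rightarrow> real \<Rightarrow> (nat \<Rightarrow> nat \<Rightarrow> 'a set) \<Rightarrow> bool" where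
  "k2_tau_gamma_partition V E k \<tau> \<gamma> P \<longleftrightarrow>
     k2_partition V k P \<and>
     real (card (bad_edges E k P)) \<le> \<gamma> * real (card V) ^ 2 \<and>
     (\<forall>i\<in>{1..k}. real (card (row_part k P i)) \<ge> \<tau> * real (card V)
                 \<and> real (card (col_part k P i)) \<ge> \<tau> * real (card V))"

end

theory Submission
  imports Defs
begin

lemma swap_card: "card (E\<inverse> \<inter> (X \<times> Y)) = card (E \<inter> (Y \<times> X))"
proof -
  have "E\<inverse> \<inter> (X \<times> Y) = prod.swap ` (E \<inter> (Y \<times> X))" by auto
  then show ?thesis by (simp add: card_image)
qed

lemma out_sum:
  assumes "finite V" "E \<subseteq> V \<times> V" "X \<subseteq> V" "\<forall>x\<in>V. card {y. (x,y) \<in> E} = d"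
  shows "card (E \<inter> (X \<times> V)) = d * card X"
proof -
  have fX: "finite X" by (rule finite_subset[OF assms(3,1)])
  have eq: "E \<inter> (X \<times> V) = (SIGMA x:X. {y. (x,y) \<in> E})" using assms(2) by blast
  have "card (SIGMA x:X. {y. (x,y) \<in> E}) = (\<Sum>x\<in>X. card {y. (x,y) \<in> E})"
    apply (rule card_SigmaI[OF fX])
  proof (rule ballI)
    fix x assume "x \<in> X"
    have "{y. (x,y) \<in> E} \<subseteq> V" using assms(2) by blast
    then show "finite {y. (x,y) \<in> E}" by (rule finite_subset[OF _ assms(1)])
  qed
  also have "\<dots> = (\<Sum>x\<in>X. d)" using assms(3,4) by (intro sum.cong) auto
  finally show ?thesis using eq by simp
qed

lemma in_sum:
  assumes "finite V" "E \<subseteq> V \<times> V" "X \<subseteq> V" "\<forall>x\<in>V. card {y. (y,x) \<in> E} = d"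
  shows "card (E \<inter> (V \<times> X)) = d * card X"
proof -
  have "card (E\<inverse> \<inter> (X \<times> V)) = d * card X"
    using assms by (intro out_sum) auto
  then show ?thesis by (simp add: swap_card)
qed

lemma prod_bound:
  assumes "finite X" "finite Y"
  shows "card (E \<inter> (X \<times> Y)) \<le> card X * card Y"
  by (rule order_trans[OF card_mono[OF finite_cartesian_product[OF assms] Int_lower2]]) (simp add: card_cartesian_product)

lemma orient_bound:
  assumes "finite X" "\<forall>x y. (x,y) \<in> E \<longrightarrow> (y,x) \<notin> E"
  shows "2 * card (E \<inter> (X \<times> X)) \<le> card X * card X"
proof -
  let ?M = "E \<inter> (X \<times> X)"
  have f: "finite ?M" by (rule finite_Int[OF disjI2]) (simp add: assms(1))
  have cv: "?M\<inverse> = E\<inverse> \<inter> (X \<times> X)" by auto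
  have "card (?M\<inverse>) = card ?M"
    unfolding cv by (rule swap_card)
  moreover have "?M \<inter> ?M\<inverse> = {}" using assms(2) by auto
  moreover have "?M \<union> ?M\<inverse> \<subseteq> X \<times> X" by auto
  moreover have f2: "finite (?M\<inverse>)" using f by simp
  ultimately have "card ?M + card ?M \<le> card (X \<times> X)"
    using card_Un_disjoint[OF f f2] card_mono[OF finite_cartesian_product[OF assms(1) assms(1)]] by metis
  then show ?thesis by (simp add: card_cartesian_product)
qed

lemma split_card:
  assumes "finite X" "finite Y1" "finite Y2" "Y1 \<inter> Y2 = {}"
  shows "card (E \<inter> (X \<times> (Y1 \<union> Y2))) = card (E \<inter> (X \<times> Y1)) + card (E \<inter> (X \<times> Y2))"
proof -
  have eq: "E \<inter> (X \<times> (Y1 \<union> Y2)) = (E \<inter> (X \<times> Y1)) \<union> (E \<inter> (X \<times> Y2))" by auto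
  have dj: "(E \<inter> (X \<times> Y1)) \<inter> (E \<inter> (X \<times> Y2)) = {}" using assms(4) by auto
  have fa: "finite (E \<inter> (X \<times> Y1))" by (rule finite_Int[OF disjI2]) (simp add: assms)
  have fb: "finite (E \<inter> (X \<times> Y2))" by (rule finite_Int[OF disjI2]) (simp add: assms)
  show ?thesis unfolding eq by (rule card_Un_disjoint[OF fa fb dj])
qed

lemma split_card2:
  assumes "finite X1" "finite X2" "finite Y" "X1 \<inter> X2 = {}"
  shows "card (E \<inter> ((X1 \<union> X2) \<times> Y)) = card (E \<inter> (X1 \<times> Y)) + card (E \<inter> (X2 \<times> Y))"
proof -
  have eq: "E \<inter> ((X1 \<union> X2) \<times> Y) = (E \<inter> (X1 \<times> Y)) \<union> (E \<inter> (X2 \<times> Y))" by auto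
  have dj: "(E \<inter> (X1 \<times> Y)) \<inter> (E \<inter> (X2 \<times> Y)) = {}" using assms(4) by auto
  have fa: "finite (E \<inter> (X1 \<times> Y))" by (rule finite_Int[OF disjI2]) (simp add: assms)
  have fb: "finite (E \<inter> (X2 \<times> Y))" by (rule finite_Int[OF disjI2]) (simp add: assms)
  show ?thesis unfolding eq by (rule card_Un_disjoint[OF fa fb dj])
qed

lemma mono_card:
  assumes "finite X'" "finite Y'" "X \<subseteq> X'" "Y \<subseteq> Y'"
  shows "card (E \<inter> (X \<times> Y)) \<le> card (E \<inter> (X' \<times> Y'))"
  apply (rule card_mono) using assms by auto

lemma core:
  fixes V :: "'a set" and E R K and n d :: nat and \<epsilon> \<tau> \<gamma> :: real
  assumes fin: "finite V" and EV: "E \<subseteq> V \<times> V"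
    and anti: "\<forall>x y. (x,y) \<in> E \<longrightarrow> (y,x) \<notin> E"
    and outd: "\<forall>x\<in>V. card {y. (x,y) \<in> E} = d"
    and ind: "\<forall>x\<in>V. card {y. (y,x) \<in> E} = d"
    and n: "n = card V" "n > 0"
    and RV: "R \<subseteq> V" and KV: "K \<subseteq> V"
    and b1: "real (card (E \<inter> (R \<times> (V - K)))) \<le> \<gamma> * real n ^ 2"
    and b2: "real (card (E \<inter> ((V - R) \<times> K))) \<le> \<gamma> * real n ^ 2"
    and r: "real (card R) \<ge> \<tau> * real n" and c: "real (card (V - R)) \<ge> \<tau> * real n"
    and dd: "real d \<ge> (1/4 + \<epsilon>) * real n"
    and eps: "0 < \<epsilon>" and eps1: "\<epsilon> < 1" and tau: "0 < \<tau>" "\<tau> \<le> \<epsilon>/2"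
    and gam: "0 < \<gamma>" "\<gamma> \<le> \<tau> * \<epsilon> / 8"
  shows "real (card (R - K)) \<ge> \<tau> * real n"
proof -
  define e where "e X Y = real (card (E \<inter> (X \<times> Y)))" for X Y
  define C where "C = V - R"
  have fR0: "finite R" "finite K" using finite_subset[OF RV fin] finite_subset[OF KV fin] by auto
  have fR: "finite R" "finite K" "finite C" "finite (R - K)" "finite (K - R)" "finite (V - K)"
    using fR0 fin unfolding C_def by simp_all
  let ?r = "real (card R)" let ?c = "real (card C)" let ?k = "real (card K)"
  let ?s = "real (card (R - K))" let ?t = "real (card (K - R))"
  have cR: "card R \<le> card V" by (rule card_mono[OF fin RV])
  have cC: "card C = card V - card R" unfolding C_def by (rule card_Diff_subset[OF fR0(1) RV])
  have nrc0: "n = card R + card C" using cR cC n(1) by simp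
  have nrc: "real n = ?r + ?c" unfolding nrc0 by simp
  have RK1: "card R = card (R \<inter> K) + card (R - K)" by (rule card_Int_Diff[OF fR0(1)])
  have RK2: "card K = card (K \<inter> R) + card (K - R)" by (rule card_Int_Diff[OF fR0(2)])
  have RK3: "K \<inter> R = R \<inter> K" by (rule Int_commute)
  have RK: "real (card (R \<inter> K)) + ?s = ?r" "real (card (R \<inter> K)) + ?t = ?k"
    using RK1 RK2 unfolding RK3 by simp_all
  have eRV: "e R V = real d * ?r" unfolding e_def using out_sum[OF fin EV RV outd] by simp
  have eCV: "e C V = real d * ?c" unfolding e_def C_def using out_sum[OF fin EV _ outd] by simp
  have eVK: "e V K = real d * ?k" unfolding e_def using in_sum[OF fin EV KV ind] by simp
  have VK: "V = K \<union> (V - K)" using KV by auto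
  have VR: "V = R \<union> C" using RV C_def by auto
  have KU: "K \<union> (V - K) = V" using KV by auto
  have RU: "R \<union> C = V" using RV C_def by auto
  have dK: "K \<inter> (V - K) = {}" by auto
  have dR: "R \<inter> C = {}" unfolding C_def by auto
  have a1: "e R V = e R K + e R (V - K)" unfolding e_def
    using split_card[OF fR(1,2,6) dK, of E, unfolded KU] by simp
  have a2: "e V K = e R K + e C K" unfolding e_def
    using split_card2[OF fR(1,3,2) dR, of E, unfolded RU] by simp
  have a3: "e C V = e C K + e C (V - K)" unfolding e_def
    using split_card[OF fR(3,2,6) dK, of E, unfolded KU] by simp
  have m1: "e R K \<le> e V K" unfolding e_def using mono_card[OF fin fR(2), of R K E] RV by simp
  have m2: "e R K \<le> e R V" unfolding e_def using mono_card[OF fR(1) fin, of R K E] KV by simp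
  have b1': "e R (V - K) \<le> \<gamma> * real n ^ 2" using b1 unfolding e_def .
  have b2': "e C K \<le> \<gamma> * real n ^ 2" using b2 unfolding e_def C_def .
  have KRT: "K \<subseteq> R \<union> (K - R)" "R \<inter> (K - R) = {}" by auto
  have fRKR: "finite (R \<union> (K - R))" using fR by simp
  have c1: "e R K \<le> e R R + e R (K - R)" unfolding e_def
    using mono_card[OF fR(1) fRKR order_refl KRT(1), of E] split_card[OF fR(1,1,5) KRT(2), of E]
    by simp
  have VKs: "V - K \<subseteq> C \<union> (R - K)" "C \<inter> (R - K) = {}" unfolding C_def by auto
  have fCRK: "finite (C \<union> (R - K))" using fR by simp
  have c2: "e C (V - K) \<le> e C C + e C (R - K)" unfolding e_def
    using mono_card[OF fR(3) fCRK order_refl VKs(1), of E] split_card[OF fR(3,3,4) VKs(2), of E]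
    by simp
  have o1: "2 * e R R \<le> ?r * ?r" unfolding e_def using orient_bound[OF fR(1) anti]
    by (metis of_nat_le_iff of_nat_mult of_nat_numeral)
  have o2: "2 * e C C \<le> ?c * ?c" unfolding e_def using orient_bound[OF fR(3) anti]
    by (metis of_nat_le_iff of_nat_mult of_nat_numeral)
  have p1: "e R (K - R) \<le> ?r * ?t" unfolding e_def using prod_bound[OF fR(1,5), of E]
    by (metis of_nat_le_iff of_nat_mult)
  have p2: "e C (R - K) \<le> ?c * ?s" unfolding e_def using prod_bound[OF fR(3,4), of E]
    by (metis of_nat_le_iff of_nat_mult)
  have npos: "real n > 0" using n by simp
  have dd': "real d \<ge> real n / 4 + \<epsilon> * real n" using dd by (simp add: algebra_simps)
  have en: "\<epsilon> * real n > 0" using eps npos by simp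
  have dpos: "real d > 0" using dd' en npos by linarith
  have dk: "real d * ?k \<le> real d * ?r + \<gamma> * real n ^ 2" using eVK a2 m2 eRV b2' by linarith
  have dn: "\<gamma> * real n ^ 2 \<le> real d * (4 * \<gamma> * real n)"
  proof -
    have "real n \<le> 4 * real d" using dd' en by linarith
    then have "\<gamma> * real n * real n \<le> \<gamma> * real n * (4 * real d)"
      using gam npos by (intro mult_left_mono) auto
    then show ?thesis by (simp add: power2_eq_square algebra_simps)
  qed
  have kr: "?k \<le> ?r + 4 * \<gamma> * real n"
  proof -
    have "real d * ?k \<le> real d * (?r + 4 * \<gamma> * real n)" using dk dn by (simp add: algebra_simps)
    then show ?thesis using dpos by simp
  qed
  have ts: "?t \<le> ?s + 4 * \<gamma> * real n" using kr RK by linarith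
  have ineq1: "2 * real d * ?r \<le> ?r * ?r + 2 * ?r * ?t + 2 * \<gamma> * real n ^ 2"
    using eRV a1 b1' c1 o1 p1 by linarith
  have ineq2: "2 * real d * ?c \<le> ?c * ?c + 2 * ?c * ?s + 2 * \<gamma> * real n ^ 2"
    using eCV a3 b2' c2 o2 p2 by linarith
  have tnp: "\<tau> * real n > 0" using tau npos by simp
  have rpos: "?r > 0" using r tnp by linarith
  have cpos: "?c > 0" using c tnp unfolding C_def by linarith
  have g1: "\<gamma> * real n ^ 2 \<le> ?r * (\<gamma> * real n / \<tau>)"
  proof -
    have "\<tau> * real n \<le> ?r" using r .
    then have "\<gamma> * real n * (\<tau> * real n) \<le> \<gamma> * real n * ?r" using gam npos by (intro mult_left_mono) auto
    then show ?thesis using tau by (simp add: field_simps power2_eq_square)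
  qed
  have g2: "\<gamma> * real n ^ 2 \<le> ?c * (\<gamma> * real n / \<tau>)"
  proof -
    have "\<tau> * real n \<le> ?c" using c C_def by simp
    then have "\<gamma> * real n * (\<tau> * real n) \<le> \<gamma> * real n * ?c" using gam npos by (intro mult_left_mono) auto
    then show ?thesis using tau by (simp add: field_simps power2_eq_square)
  qed
  have h1: "2 * real d \<le> ?r + 2 * ?t + 2 * (\<gamma> * real n / \<tau>)"
  proof -
    have eq: "?r * (?r + 2 * ?t + 2 * (\<gamma> * real n / \<tau>)) = ?r * ?r + 2 * ?r * ?t + 2 * (?r * (\<gamma> * real n / \<tau>))"
      by (simp add: algebra_simps)
    have "?r * (2 * real d) \<le> ?r * (?r + 2 * ?t + 2 * (\<gamma> * real n / \<tau>))"
      unfolding eq using ineq1 g1 mult.commute[of "?r" "2 * real d"] mult.assoc[of 2 \<gamma> "real n ^ 2"] by linarith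
    then show ?thesis using rpos by simp
  qed
  have h2: "2 * real d \<le> ?c + 2 * ?s + 2 * (\<gamma> * real n / \<tau>)"
  proof -
    have eq: "?c * (?c + 2 * ?s + 2 * (\<gamma> * real n / \<tau>)) = ?c * ?c + 2 * ?c * ?s + 2 * (?c * (\<gamma> * real n / \<tau>))"
      by (simp add: algebra_simps)
    have "?c * (2 * real d) \<le> ?c * (?c + 2 * ?s + 2 * (\<gamma> * real n / \<tau>))"
      unfolding eq using ineq2 g2 mult.commute[of "?c" "2 * real d"] mult.assoc[of 2 \<gamma> "real n ^ 2"] by linarith
    then show ?thesis using cpos by simp
  qed
  have gt: "\<gamma> / \<tau> \<le> \<epsilon> / 8" using gam tau by (simp add: field_simps)
  have gt': "\<gamma> * real n / \<tau> \<le> \<epsilon> / 8 * real n"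
    using mult_right_mono[OF gt, of "real n"] npos by simp
  have g3: "\<gamma> \<le> \<epsilon> / 16"
  proof -
    have "\<tau> * \<epsilon> \<le> \<epsilon> / 2 * \<epsilon>" using tau eps by (intro mult_right_mono) auto
    moreover have "\<epsilon> * \<epsilon> \<le> \<epsilon> * 1" using eps eps1 by (intro mult_left_mono) auto
    moreover have "\<epsilon> / 2 * \<epsilon> = (\<epsilon> * \<epsilon>) / 2" by simp
    ultimately show ?thesis using gam by linarith
  qed
  have g3': "\<gamma> * real n \<le> \<epsilon> / 16 * real n" using mult_right_mono[OF g3, of "real n"] npos by simp
  have tn: "\<tau> * real n \<le> \<epsilon> / 2 * real n" using mult_right_mono[OF tau(2), of "real n"] npos by simp
  define A where "A = \<epsilon> * real n"
  define G where "G = \<gamma> * real n"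
  define X where "X = \<gamma> * real n / \<tau>"
  define T where "T = \<tau> * real n"
  have f1: "X \<le> A / 8" using gt' unfolding X_def A_def by simp
  have f2: "G \<le> A / 16" using g3' unfolding G_def A_def by simp
  have f3: "T \<le> A / 2" using tn unfolding T_def A_def by simp
  have f4: "real d \<ge> real n / 4 + A" using dd' unfolding A_def .
  have f5: "?t \<le> ?s + 4 * G" using ts unfolding G_def by simp
  have f6: "2 * real d \<le> ?r + 2 * ?t + 2 * X" using h1 unfolding X_def .
  have f7: "2 * real d \<le> ?c + 2 * ?s + 2 * X" using h2 unfolding X_def .
  have "T \<le> ?s" using f1 f2 f3 f4 f5 f6 f7 nrc by linarith
  then show ?thesis unfolding T_def .
qed

theorem proposition3p11:
  "\<forall>\<epsilon>::real. 0 < \<epsilon> \<and> \<epsilon> < 1 \<longrightarrow>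
    (\<exists>\<tau>0>0. \<forall>\<tau>::real. 0 < \<tau> \<and> \<tau> \<le> \<tau>0 \<longrightarrow>
      (\<exists>\<gamma>0>0. \<forall>\<gamma>::real. 0 < \<gamma> \<and> \<gamma> \<le> \<gamma>0 \<longrightarrow>
        (\<forall>(V::'a set) E (d::nat) (k::nat) P.
           oriented_graph V E \<and> regular_digraph V E d \<and>
           1 / real (card V) < \<gamma> \<and>
           real d \<ge> (1/4 + \<epsilon>) * real (card V) \<and> k \<ge> 2 \<and>
           k2_tau_gamma_partition V E k \<tau> \<gamma> P \<longrightarrow>
           (\<forall>i\<in>{1..k}.
              real (card (\<Union>j\<in>{1..k} - {i}. P i j)) \<ge> \<tau> * real (card V) \<and>
              real (card (\<Union>j\<in>{1..k} - {i}. P j i)) \<ge> \<tau> * real (card V)))))"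
proof (intro allI impI)
  fix \<epsilon> :: real assume e: "0 < \<epsilon> \<and> \<epsilon> < 1"
  show "\<exists>\<tau>0>0. \<forall>\<tau>::real. 0 < \<tau> \<and> \<tau> \<le> \<tau>0 \<longrightarrow>
      (\<exists>\<gamma>0>0. \<forall>\<gamma>::real. 0 < \<gamma> \<and> \<gamma> \<le> \<gamma>0 \<longrightarrow>
        (\<forall>(V::'a set) E (d::nat) (k::nat) P.
           oriented_graph V E \<and> regular_digraph V E d \<and>
           1 / real (card V) < \<gamma> \<and>
           real d \<ge> (1/4 + \<epsilon>) * real (card V) \<and> k \<ge> 2 \<and>
           k2_tau_gamma_partition V E k \<tau> \<gamma> P \<longrightarrow>
           (\<forall>i\<in>{1..k}.
              real (card (\<Union>j\<in>{1..k} - {i}. P i j)) \<ge> \<tau> * real (card V) \<and>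
              real (card (\<Union>j\<in>{1..k} - {i}. P j i)) \<ge> \<tau> * real (card V))))"
  proof (rule exI[of _ "\<epsilon>/2"], intro conjI allI impI)
    show "0 < \<epsilon>/2" using e by simp
    fix \<tau> :: real assume t: "0 < \<tau> \<and> \<tau> \<le> \<epsilon>/2"
    show "\<exists>\<gamma>0>0. \<forall>\<gamma>::real. 0 < \<gamma> \<and> \<gamma> \<le> \<gamma>0 \<longrightarrow>
        (\<forall>(V::'a set) E (d::nat) (k::nat) P.
           oriented_graph V E \<and> regular_digraph V E d \<and>
           1 / real (card V) < \<gamma> \<and>
           real d \<ge> (1/4 + \<epsilon>) * real (card V) \<and> k \<ge> 2 \<and>
           k2_tau_gamma_partition V E k \<tau> \<gamma> P \<longrightarrow>
           (\<forall>i\<in>{1..k}.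
              real (card (\<Union>j\<in>{1..k} - {i}. P i j)) \<ge> \<tau> * real (card V) \<and>
              real (card (\<Union>j\<in>{1..k} - {i}. P j i)) \<ge> \<tau> * real (card V)))"
    proof (rule exI[of _ "\<tau> * \<epsilon> / 8"], intro conjI allI impI ballI)
      show "0 < \<tau> * \<epsilon> / 8" using e t by simp
      fix \<gamma> :: real and V :: "'a set" and E d k P i
      assume g: "0 < \<gamma> \<and> \<gamma> \<le> \<tau> * \<epsilon> / 8"
      assume H: "oriented_graph V E \<and> regular_digraph V E d \<and>
           1 / real (card V) < \<gamma> \<and>
           real d \<ge> (1/4 + \<epsilon>) * real (card V) \<and> k \<ge> 2 \<and>
           k2_tau_gamma_partition V E k \<tau> \<gamma> P"
      assume i: "i \<in> {1..k}"
      have og: "finite V" "E \<subseteq> V \<times> V" "\<forall>x y. (x,y) \<in> E \<longrightarrow> (y,x) \<notin> E"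
        using H unfolding oriented_graph_def by auto
      have reg: "\<forall>x\<in>V. card {y. (x,y) \<in> E} = d" "\<forall>x\<in>V. card {y. (y,x) \<in> E} = d"
        using H unfolding regular_digraph_def outdeg_def indeg_def by auto
      have kp: "k2_partition V k P" and bad: "real (card (bad_edges E k P)) \<le> \<gamma> * real (card V) ^ 2"
        and sz: "\<forall>i\<in>{1..k}. real (card (row_part k P i)) \<ge> \<tau> * real (card V)
                 \<and> real (card (col_part k P i)) \<ge> \<tau> * real (card V)"
        using H unfolding k2_tau_gamma_partition_def by auto
      have disj: "\<And>a b a' b'. a \<in> {1..k} \<Longrightarrow> b \<in> {1..k} \<Longrightarrow> a' \<in> {1..k} \<Longrightarrow> b' \<in> {1..k} \<Longrightarrow>
          (a, b) \<noteq> (a', b') \<Longrightarrow> P a b \<inter> P a' b' = {}"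
        using kp unfolding k2_partition_def by blast
      have cover: "(\<Union>a\<in>{1..k}. \<Union>b\<in>{1..k}. P a b) = V" using kp unfolding k2_partition_def by blast
      have PV: "\<And>a b. a \<in> {1..k} \<Longrightarrow> b \<in> {1..k} \<Longrightarrow> P a b \<subseteq> V" using cover by blast
      define R where "R = row_part k P i"
      define K where "K = col_part k P i"
      have RV: "R \<subseteq> V" unfolding R_def row_part_def using PV i by blast
      have KV: "K \<subseteq> V" unfolding K_def col_part_def using PV i by blast
      have fB: "finite (bad_edges E k P)"
      proof -
        have "bad_edges E k P \<subseteq> E" unfolding bad_edges_def edges_between_def by auto
        then show ?thesis using og by (meson finite_SigmaI finite_subset)
      qed
      have bad1: "E \<inter> (R \<times> (V - K)) \<subseteq> bad_edges E k P"
      proof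
        fix x assume x: "x \<in> E \<inter> (R \<times> (V - K))"
        then obtain a b where ab: "x = (a, b)" "(a,b) \<in> E" "a \<in> R" "b \<in> V" "b \<notin> K" by auto
        then obtain i' j where ij: "i' \<in> {1..k}" "j \<in> {1..k}" "b \<in> P i' j" using cover by blast
        then have "j \<noteq> i" using ab(5) unfolding K_def col_part_def by blast
        moreover have "b \<in> col_part k P j" using ij unfolding col_part_def by blast
        ultimately show "x \<in> bad_edges E k P" using ab ij i unfolding bad_edges_def edges_between_def R_def
          by fastforce
      qed
      have bad2: "E \<inter> ((V - R) \<times> K) \<subseteq> bad_edges E k P"
      proof
        fix x assume x: "x \<in> E \<inter> ((V - R) \<times> K)"
        then obtain a b where ab: "x = (a, b)" "(a,b) \<in> E" "a \<in> V" "a \<notin> R" "b \<in> K" by auto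
        then obtain i' j where ij: "i' \<in> {1..k}" "j \<in> {1..k}" "a \<in> P i' j" using cover by blast
        then have "i' \<noteq> i" using ab(4) unfolding R_def row_part_def by blast
        moreover have "a \<in> row_part k P i'" using ij unfolding row_part_def by blast
        ultimately show "x \<in> bad_edges E k P" using ab ij i unfolding bad_edges_def edges_between_def K_def
          by fastforce
      qed
      have "(if i = 1 then 2 else 1) \<in> {1..k} \<and> (if i = 1 then 2 else (1::nat)) \<noteq> i" using H i by auto
      then obtain j where j: "j \<in> {1..k}" "j \<noteq> i" by blast
      have rowj: "row_part k P j \<subseteq> V - R"
      proof
        fix x assume "x \<in> row_part k P j"
        then obtain b where b: "b \<in> {1..k}" "x \<in> P j b" unfolding row_part_def by blast
        have "x \<notin> R"
        proof
          assume "x \<in> R"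
          then obtain b' where "b' \<in> {1..k}" "x \<in> P i b'" unfolding R_def row_part_def by blast
          then show False using disj[of j b i b'] b j i by blast
        qed
        then show "x \<in> V - R" using PV b j by blast
      qed
      have colj: "col_part k P j \<subseteq> V - K"
      proof
        fix x assume "x \<in> col_part k P j"
        then obtain b where b: "b \<in> {1..k}" "x \<in> P b j" unfolding col_part_def by blast
        have "x \<notin> K"
        proof
          assume "x \<in> K"
          then obtain b' where "b' \<in> {1..k}" "x \<in> P b' i" unfolding K_def col_part_def by blast
          then show False using disj[of b j b' i] b j i by blast
        qed
        then show "x \<in> V - K" using PV b j by blast
      qed
      have sub1: "R - K \<subseteq> (\<Union>j\<in>{1..k} - {i}. P i j)" unfolding R_def K_def row_part_def col_part_def
        using i by blast
      have sub2: "K - R \<subseteq> (\<Union>j\<in>{1..k} - {i}. P j i)" unfolding R_def K_def row_part_def col_part_def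
        using i by blast
      have fU1: "finite (\<Union>j\<in>{1..k} - {i}. P i j)" using PV i og(1) by (meson DiffD1 UN_least finite_subset)
      have fU2: "finite (\<Union>j\<in>{1..k} - {i}. P j i)" using PV i og(1) by (meson DiffD1 UN_least finite_subset)
      have fin: "real (card (\<Union>j\<in>{1..k} - {i}. P i j)) \<ge> \<tau> * real (card V) \<and>
              real (card (\<Union>j\<in>{1..k} - {i}. P j i)) \<ge> \<tau> * real (card V)"
      proof (cases "card V = 0")
        case True then show ?thesis by simp
      next
        case False
        have b1: "real (card (E \<inter> (R \<times> (V - K)))) \<le> \<gamma> * real (card V) ^ 2"
          using bad card_mono[OF fB bad1] by linarith
        have b2: "real (card (E \<inter> ((V - R) \<times> K))) \<le> \<gamma> * real (card V) ^ 2"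
          using bad card_mono[OF fB bad2] by linarith
        have rR: "\<tau> * real (card V) \<le> real (card R)" using sz i unfolding R_def by blast
        have rK: "\<tau> * real (card V) \<le> real (card K)" using sz i unfolding K_def by blast
        have fVR: "finite (V - R)" "finite (V - K)" using og by auto
        have rC: "\<tau> * real (card V) \<le> real (card (V - R))"
          using sz j card_mono[OF fVR(1) rowj] by (meson of_nat_le_iff order_trans)
        have rD: "\<tau> * real (card V) \<le> real (card (V - K))"
          using sz j card_mono[OF fVR(2) colj] by (meson of_nat_le_iff order_trans)
        have c1: "\<tau> * real (card V) \<le> real (card (R - K))"
          apply (rule core[where V=V and E=E and d=d and n="card V" and R=R and K=K and \<gamma>=\<gamma> and \<tau>=\<tau> and \<epsilon>=\<epsilon>])
          using og reg RV KV b1 b2 rR rC False H e t g by auto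
        have og': "E\<inverse> \<subseteq> V \<times> V" "\<forall>x y. (x,y) \<in> E\<inverse> \<longrightarrow> (y,x) \<notin> E\<inverse>" using og by auto
        have reg': "\<forall>x\<in>V. card {y. (x,y) \<in> E\<inverse>} = d" "\<forall>x\<in>V. card {y. (y,x) \<in> E\<inverse>} = d"
          using reg by auto
        have b1': "real (card (E\<inverse> \<inter> (K \<times> (V - R)))) \<le> \<gamma> * real (card V) ^ 2"
          using b2 by (simp add: swap_card)
        have b2': "real (card (E\<inverse> \<inter> ((V - K) \<times> R))) \<le> \<gamma> * real (card V) ^ 2"
          using b1 by (simp add: swap_card)
        have c2: "\<tau> * real (card V) \<le> real (card (K - R))"
          apply (rule core[where V=V and E="E\<inverse>" and d=d and n="card V" and R=K and K=R and \<gamma>=\<gamma> and \<tau>=\<tau> and \<epsilon>=\<epsilon>])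
          using og og' reg' RV KV b1' b2' rK rD False H e t g by auto
        show ?thesis using c1 c2 card_mono[OF fU1 sub1] card_mono[OF fU2 sub2]
          by (meson of_nat_le_iff order_trans)
      qed
      from fin show "real (card (\<Union>j\<in>{1..k} - {i}. P i j)) \<ge> \<tau> * real (card V)" by blast
      from fin show "real (card (\<Union>j\<in>{1..k} - {i}. P j i)) \<ge> \<tau> * real (card V)" by blast
    qed
  qed
qed

end
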